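(* For every $n \geq 3$, the set $\{D_n\}$ is equidistributed.
   Context: A linear arrangement of $\{1,\ldots,n\}$ is a sequence $a_1\cdots a_n$ in which each of $1,\ldots,n$ appears exactly once. It contains the pattern $ij$ if $a_t=i$ and $a_{t+1}=j$ for some $t$; otherwise it avoids it. $\{D_n\}$ is the set of linear arrangements of $\{1,\ldots,n\}$ avoiding all of the patterns $12, 23, \ldots, (n-1)n, n1$. For a set $X$ of linear arrangements of $\{1,\ldots,n\}$ and $i\in\{1,\ldots,n\}$, the class $X^{(i)}$ is the set of arrangements in $X$ whose first entry is $i$. $X$ is called equidistributed if it is partitioned into its nonempty classes and all nonempty classes $X^{(i)}$ have the same cardinality. *)

theory Defs
  imports Main
begin

definition linear_arrangement :: "nat \<Rightarrow> nat list \<Rightarrow> bool" where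
  "linear_arrangement n a \<longleftrightarrow> distinct a \<and> set a = {1..n}"

definition contains_pattern :: "nat list \<Rightarrow> nat \<Rightarrow> nat \<Rightarrow> bool" where
  "contains_pattern a i j \<longleftrightarrow> (\<exists>t. Suc t < length a \<and> a ! t = i \<and> a ! Suc t = j)"

definition D :: "nat \<Rightarrow> nat list set" where
  "D n = {a. linear_arrangement n a
              \<and> (\<forall>i\<in>{1..<n}. \<not> contains_pattern a i (i + 1))
              \<and> \<not> contains_pattern a n 1}"

definition arr_class :: "nat list set \<Rightarrow> nat \<Rightarrow> nat list set" where
  "arr_class X i = {a \<in> X. a \<noteq> [] \<and> hd a = i}"

definition equidistributed :: "nat \<Rightarrow> nat list set \<Rightarrow> bool" where
  "equidistributed n X \<longleftrightarrow>
     X = (\<Union>i\<in>{1..n}. arr_class X i)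
     \<and> (\<forall>i\<in>{1..n}. \<forall>j\<in>{1..n}. arr_class X i \<noteq> {} \<longrightarrow> arr_class X j \<noteq> {}
            \<longrightarrow> card (arr_class X i) = card (arr_class X j))"

end

theory Submission
  imports Defs
begin

definition sc :: "nat \<Rightarrow> nat \<Rightarrow> nat" where
  "sc n x = (if x = n then 1 else x + 1)"
definition pr :: "nat \<Rightarrow> nat \<Rightarrow> nat" where
  "pr n x = (if x = 1 then n else x - 1)"

lemma sc_in: "n \<ge> 1 \<Longrightarrow> x \<in> {1..n} \<Longrightarrow> sc n x \<in> {1..n}"
  by (auto simp: sc_def)
lemma pr_in: "n \<ge> 1 \<Longrightarrow> x \<in> {1..n} \<Longrightarrow> pr n x \<in> {1..n}"
  by (auto simp: pr_def)
lemma pr_sc: "n \<ge> 1 \<Longrightarrow> x \<in> {1..n} \<Longrightarrow> pr n (sc n x) = x"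
  by (auto simp: sc_def pr_def)
lemma sc_pr: "n \<ge> 1 \<Longrightarrow> x \<in> {1..n} \<Longrightarrow> sc n (pr n x) = x"
  by (auto simp: sc_def pr_def)

lemma D_alt:
  "a \<in> D n \<longleftrightarrow> linear_arrangement n a \<and> (\<forall>t. Suc t < length a \<longrightarrow> a ! Suc t \<noteq> sc n (a ! t))"
proof
  assume a: "a \<in> D n"
  hence la: "linear_arrangement n a" by (simp add: D_def)
  show "linear_arrangement n a \<and> (\<forall>t. Suc t < length a \<longrightarrow> a ! Suc t \<noteq> sc n (a ! t))"
  proof (intro conjI la allI impI notI)
    fix t assume t: "Suc t < length a" and e: "a ! Suc t = sc n (a ! t)"
    have "a ! t \<in> {1..n}" using la t unfolding linear_arrangement_def
      by (metis Suc_lessD nth_mem)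
    then show False
    proof (cases "a ! t = n")
      case True
      then show ?thesis using a t e unfolding D_def contains_pattern_def sc_def by auto
    next
      case False
      with \<open>a ! t \<in> {1..n}\<close> have "a ! t \<in> {1..<n}" by auto
      then show ?thesis using a t e False unfolding D_def contains_pattern_def sc_def by auto
    qed
  qed
next
  assume h: "linear_arrangement n a \<and> (\<forall>t. Suc t < length a \<longrightarrow> a ! Suc t \<noteq> sc n (a ! t))"
  show "a \<in> D n" unfolding D_def contains_pattern_def
  proof (intro CollectI conjI ballI notI)
    show "linear_arrangement n a" using h by simp
  next
    fix i assume i: "i \<in> {1..<n}" and "\<exists>t. Suc t < length a \<and> a ! t = i \<and> a ! Suc t = i + 1"
    then obtain t where "Suc t < length a" "a ! t = i" "a ! Suc t = i + 1" by blast
    with h i show False by (auto simp: sc_def)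
  next
    assume "\<exists>t. Suc t < length a \<and> a ! t = n \<and> a ! Suc t = 1"
    then obtain t where "Suc t < length a" "a ! t = n" "a ! Suc t = 1" by blast
    with h show False by (auto simp: sc_def)
  qed
qed

lemma map_pres:
  assumes n: "n \<ge> 1" and a: "a \<in> D n"
    and f_in: "\<And>x. x \<in> {1..n} \<Longrightarrow> f x \<in> {1..n}"
    and g_in: "\<And>x. x \<in> {1..n} \<Longrightarrow> g x \<in> {1..n}"
    and gf: "\<And>x. x \<in> {1..n} \<Longrightarrow> g (f x) = x"
    and fg: "\<And>x. x \<in> {1..n} \<Longrightarrow> f (g x) = x"
    and comm: "\<And>x. x \<in> {1..n} \<Longrightarrow> sc n (f x) = f (sc n x)"
  shows "map f a \<in> D n"
proof -
  have la: "distinct a" "set a = {1..n}" using a by (auto simp: D_alt linear_arrangement_def)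
  have inj: "inj_on f {1..n}" by (metis gf inj_onI)
  have im: "f ` {1..n} = {1..n}"
  proof
    show "f ` {1..n} \<subseteq> {1..n}" using f_in by auto
    show "{1..n} \<subseteq> f ` {1..n}" using fg g_in by (metis image_eqI subsetI)
  qed
  have "linear_arrangement n (map f a)"
    unfolding linear_arrangement_def using la inj im
    by (simp add: distinct_map)
  moreover have "\<forall>t. Suc t < length (map f a) \<longrightarrow> map f a ! Suc t \<noteq> sc n (map f a ! t)"
  proof (intro allI impI notI)
    fix t assume t: "Suc t < length (map f a)" and e: "map f a ! Suc t = sc n (map f a ! t)"
    have m1: "a ! t \<in> {1..n}" using la t by (metis Suc_lessD length_map nth_mem)
    have m2: "a ! Suc t \<in> {1..n}" using la t by (metis length_map nth_mem)
    have "f (a ! Suc t) = f (sc n (a ! t))" using e t comm[OF m1] by simp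
    hence "a ! Suc t = sc n (a ! t)" using inj m2 sc_in[OF n m1] by (meson inj_onD)
    thus False using a t by (auto simp: D_alt)
  qed
  ultimately show ?thesis by (simp add: D_alt)
qed

lemma D_sc: "n \<ge> 1 \<Longrightarrow> a \<in> D n \<Longrightarrow> map (sc n) a \<in> D n"
  by (rule map_pres[where g="pr n"]) (auto simp: sc_def pr_def)

lemma D_pr: "n \<ge> 1 \<Longrightarrow> a \<in> D n \<Longrightarrow> map (pr n) a \<in> D n"
  by (rule map_pres[where g="sc n"]) (auto simp: sc_def pr_def)

lemma D_set: "a \<in> D n \<Longrightarrow> set a = {1..n}"
  by (simp add: D_def linear_arrangement_def)

lemma D_len: "a \<in> D n \<Longrightarrow> length a = n"
proof -
  assume "a \<in> D n"
  hence "distinct a" "set a = {1..n}" by (auto simp: D_def linear_arrangement_def)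
  hence "length a = card {1..n}" using distinct_card by metis
  thus ?thesis by simp
qed

lemma D_finite: "finite (D n)"
proof -
  have "D n \<subseteq> {xs. set xs \<subseteq> {1..n} \<and> length xs = n}" using D_set D_len by auto
  thus ?thesis using finite_lists_length_eq[of "{1..n}" n] finite_subset by blast
qed

lemma map_pr_sc: "n \<ge> 1 \<Longrightarrow> a \<in> D n \<Longrightarrow> map (pr n) (map (sc n) a) = a"
  unfolding map_map by (rule map_idI) (use D_set[of a n] pr_sc[of n] in auto)

lemma map_sc_pr: "n \<ge> 1 \<Longrightarrow> a \<in> D n \<Longrightarrow> map (sc n) (map (pr n) a) = a"
  unfolding map_map by (rule map_idI) (use D_set[of a n] sc_pr[of n] in auto)

lemma card_class_sc:
  assumes n: "n \<ge> 1" and i: "i \<in> {1..n}"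
  shows "card (arr_class (D n) i) = card (arr_class (D n) (sc n i))"
proof (rule antisym)
  show "card (arr_class (D n) i) \<le> card (arr_class (D n) (sc n i))"
  proof (rule card_inj_on_le[where f="map (sc n)"])
    show "inj_on (map (sc n)) (arr_class (D n) i)"
      by (rule inj_on_inverseI[where g="map (pr n)"]) (auto simp: arr_class_def map_pr_sc[OF n, unfolded map_map])
    show "map (sc n) ` arr_class (D n) i \<subseteq> arr_class (D n) (sc n i)"
      using D_sc[OF n] by (auto simp: arr_class_def hd_map)
    show "finite (arr_class (D n) (sc n i))"
      using D_finite by (auto simp: arr_class_def)
  qed
  show "card (arr_class (D n) (sc n i)) \<le> card (arr_class (D n) i)"
  proof (rule card_inj_on_le[where f="map (pr n)"])
    show "inj_on (map (pr n)) (arr_class (D n) (sc n i))"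
      by (rule inj_on_inverseI[where g="map (sc n)"]) (auto simp: arr_class_def map_sc_pr[OF n, unfolded map_map])
    show "map (pr n) ` arr_class (D n) (sc n i) \<subseteq> arr_class (D n) i"
      using D_pr[OF n] pr_sc[OF n i] by (auto simp: arr_class_def hd_map)
    show "finite (arr_class (D n) i)"
      using D_finite by (auto simp: arr_class_def)
  qed
qed

lemma all_eq:
  assumes n: "n \<ge> 1"
  shows "i \<in> {1..n} \<Longrightarrow> card (arr_class (D n) i) = card (arr_class (D n) 1)"
proof (induction i)
  case 0 then show ?case by simp
next
  case (Suc i)
  show ?case
  proof (cases "i = 0")
    case True then show ?thesis by simp
  next
    case False
    hence i: "i \<in> {1..n}" "i \<noteq> n" using Suc.prems by auto
    have "sc n i = Suc i" using i by (simp add: sc_def)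
    thus ?thesis using card_class_sc[OF n i(1)] Suc.IH i by simp
  qed
qed

theorem proposition4p3:
  fixes n :: nat
  assumes "n \<ge> 3"
  shows "equidistributed n (D n)"
  unfolding equidistributed_def
proof (intro conjI ballI impI)
  show "D n = (\<Union>i\<in>{1..n}. arr_class (D n) i)"
  proof
    show "D n \<subseteq> (\<Union>i\<in>{1..n}. arr_class (D n) i)"
    proof
      fix a assume a: "a \<in> D n"
      hence "a \<noteq> []" using D_len[OF a] assms by auto
      hence "hd a \<in> {1..n}" using D_set[OF a] by (metis hd_in_set)
      thus "a \<in> (\<Union>i\<in>{1..n}. arr_class (D n) i)" using a \<open>a \<noteq> []\<close>
        by (auto simp: arr_class_def)
    qed
    show "(\<Union>i\<in>{1..n}. arr_class (D n) i) \<subseteq> D n" by (auto simp: arr_class_def)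
  qed
next
  fix i j assume ij: "i \<in> {1..n}" "j \<in> {1..n}"
  have n1: "n \<ge> 1" using assms by simp
  show "card (arr_class (D n) i) = card (arr_class (D n) j)"
    using all_eq[OF n1 ij(1)] all_eq[OF n1 ij(2)] by (rule trans[OF _ sym])
qed

end
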